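(* For every integer $a\geq 2$, $$\sum_{n\geq 1}\frac{H_n}{(2n+1)^{2a-1}}=-2\lambda(2a-1)\ln 2+\Big(a-\frac12\Big)\lambda(2a)-\sum_{q=1}^{a-2}\lambda(2q+1)\lambda(2a-2q-1),$$ where an empty sum equals $0$.
   Context: $H_n=1+\frac12+\cdots+\frac1n$ is the $n$-th harmonic number. For real $s>1$, $\lambda(s)=\sum_{n\geq 1}\frac{1}{(2n-1)^s}=(1-2^{-s})\zeta(s)$. *)

theory Defs
  imports "HOL-Analysis.Analysis"
begin

definition dlambda :: "real \<Rightarrow> real" where
  "dlambda s = (\<Sum>m. 1 / (2 * real m + 1) powr s)"

end

theory Submission
  imports Defs
begin


lemma tele_gen:
  fixes h :: "nat \<Rightarrow> real"
  assumes "h \<longlonglongrightarrow> 0"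
  shows "(\<lambda>i. h i - h (i + n)) sums (\<Sum>i<n. h i)"
proof (induction n)
  case 0 then show ?case by simp
next
  case (Suc n)
  have "(\<lambda>i. h (i + n) - h (Suc (i + n))) sums (h (0 + n) - 0)"
    using telescope_sums'[of "\<lambda>i. h (i + n)" 0] LIMSEQ_ignore_initial_segment[OF assms, of n]
    by simp
  from sums_add[OF Suc this] show ?case by simp
qed

definition X :: "nat \<Rightarrow> real" where "X i = 2 * real i + 1"

lemma X_pos[simp]: "X i > 0" and X_ge1[simp]: "X i \<ge> 1" by (auto simp: X_def)

lemma harm_alt: "harm m = (\<Sum>i<m. 1 / (real i + 1))"
  by (induction m) (auto simp: harm_Suc harm_def[of 0] field_simps)

lemma harm_rev: "(\<Sum>k<m. 1 / real (m - k)) = harm m"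
proof (induction m)
  case 0 then show ?case by (simp add: harm_def)
next
  case (Suc m)
  have "(\<Sum>k<Suc m. 1 / real (Suc m - k)) = 1 / real (Suc m) + (\<Sum>k<m. 1 / real (m - k))"
    by (subst sum.lessThan_Suc_shift) simp
  then show ?case using Suc by (simp add: harm_Suc field_simps)
qed

lemma tele_harm: "(\<lambda>k. 1 / (real k + 1) - 1 / (real (k + m) + 1)) sums harm m"
proof -
  have "(\<lambda>k. 1 / (real k + 1)) \<longlonglongrightarrow> 0"
    using LIMSEQ_inverse_real_of_nat by (simp add: inverse_eq_divide add.commute)
  from tele_gen[OF this, of m] harm_alt[of m] show ?thesis by simp
qed

lemma Kid: "(x::real) \<ge> 0 \<Longrightarrow> y \<ge> 0 \<Longrightarrow> ((1/(1+2*x) - 1/(2+2*x)) + (1/(x+1) - 1/(x+y+1))/2)/(2*y+1) = 1/((2*x+1)*(2*x+1+(2*y+1)))"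
  by (simp add: divide_simps) (simp add: algebra_simps)

lemma K_sums: "(\<lambda>j. 1 / (X j * (X j + X m))) sums ((ln 2 + harm m / 2) / X m)"
proof -
  have a: "(\<lambda>k. 1 / (1 + 2 * real k) - 1 / (2 + 2 * real k)) sums ln 2"
    using alternating_harmonic_series_sums' by (simp add: inverse_eq_divide)
  have b: "(\<lambda>k. (1 / (real k + 1) - 1 / (real (k + m) + 1)) / 2) sums (harm m / 2)"
    by (intro sums_divide tele_harm)
  have "(\<lambda>k. ((1 / (1 + 2 * real k) - 1 / (2 + 2 * real k)) + (1 / (real k + 1) - 1 / (real (k + m) + 1)) / 2) / X m)
      sums ((ln 2 + harm m / 2) / X m)"
    by (intro sums_divide sums_add a b)
  moreover have "((1 / (1 + 2 * real k) - 1 / (2 + 2 * real k)) + (1 / (real k + 1) - 1 / (real (k + m) + 1)) / 2) / X m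
     = 1 / (X k * (X k + X m))" for k
    using Kid[of "real k" "real m"] by (simp add: X_def)
  ultimately show ?thesis by simp
qed

lemma Xinv_lim: "(\<lambda>i. 1 / X i) \<longlonglongrightarrow> 0"
proof -
  have "strict_mono (\<lambda>i::nat. 2 * i)" by (auto simp: strict_mono_def)
  from LIMSEQ_subseq_LIMSEQ[OF LIMSEQ_inverse_real_of_nat this]
  show ?thesis by (simp add: o_def X_def inverse_eq_divide add.commute)
qed

lemma Gid1: "(x::real) \<ge> 0 \<Longrightarrow> y \<ge> 0 \<Longrightarrow>
   ((1/(2+2*x) - 1/(1+2*x)) + (1/(2*x+1) - 1/(2*(x+(y+1))+1))) / (2*y+1)
   = 1 / ((2*(x+(y+1))+1) * ((2*(x+(y+1))+1) - (2*y+1)))"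
  by (simp add: divide_simps) (simp add: algebra_simps)

lemma Gid2: "(x::real) \<ge> 0 \<Longrightarrow> x < y \<Longrightarrow>
   1 / ((2*x+1) * ((2*x+1) - (2*y+1))) = (- (1 / (y - x)) / 2 - 1 / (2*x+1)) / (2*y+1)"
  by (simp add: divide_simps) (simp add: algebra_simps)

lemma sumaux: "(\<Sum>i\<in>A. (- (u i) / 2 - v i) / (c::real)) = (- (\<Sum>i\<in>A. u i) / 2 - (\<Sum>i\<in>A. v i)) / c"
  by (simp add: sum_divide_distrib[symmetric] sum_subtractf sum_negf)

lemma G_sums: "(\<lambda>j. if j = m then 0 else 1 / (X j * (X j - X m))) sums ((1 / X m - ln 2 - harm m / 2) / X m)"
proof -
  define f where "f = (\<lambda>j. if j = m then 0 else 1 / (X j * (X j - X m)))"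
  have a: "(\<lambda>k. 1 / (2 + 2 * real k) - 1 / (1 + 2 * real k)) sums (- ln 2)"
    using sums_minus[OF alternating_harmonic_series_sums'] by (simp add: inverse_eq_divide)
  have b: "(\<lambda>i. 1 / X i - 1 / X (i + Suc m)) sums (\<Sum>i<Suc m. 1 / X i)"
    by (rule tele_gen[OF Xinv_lim])
  have c: "(\<lambda>i. ((1 / (2 + 2 * real i) - 1 / (1 + 2 * real i)) + (1 / X i - 1 / X (i + Suc m))) / X m)
      sums ((- ln 2 + (\<Sum>i<Suc m. 1 / X i)) / X m)"
    by (intro sums_divide sums_add a b)
  have "(\<lambda>i. f (i + Suc m)) sums ((- ln 2 + (\<Sum>i<Suc m. 1 / X i)) / X m)"
  proof -
    have "((1 / (2 + 2 * real i) - 1 / (1 + 2 * real i)) + (1 / X i - 1 / X (i + Suc m))) / X m = f (i + Suc m)" for i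
      using Gid1[of "real i" "real m"] by (simp add: f_def X_def)
    with c show ?thesis by simp
  qed
  hence "f sums ((- ln 2 + (\<Sum>i<Suc m. 1 / X i)) / X m + (\<Sum>i<Suc m. f i))"
    by (rule sums_iff_shift[THEN iffD1])
  moreover have "(\<Sum>i<Suc m. f i) = (- harm m / 2 - (\<Sum>i<m. 1 / X i)) / X m"
  proof -
    have "(\<Sum>i<Suc m. f i) = (\<Sum>i<m. f i)" by (simp add: f_def)
    also have "\<dots> = (\<Sum>i<m. (- (1 / real (m - i)) / 2 - 1 / X i) / X m)"
    proof (rule sum.cong[OF refl])
      fix i assume "i \<in> {..<m}"
      then have "i < m" by simp
      then have "real (m - i) = real m - real i" by simp
      with Gid2[of "real i" "real m"] \<open>i < m\<close> show "f i = (- (1 / real (m - i)) / 2 - 1 / X i) / X m"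
        by (simp add: f_def X_def)
    qed
    also have "\<dots> = (- (\<Sum>i<m. 1 / real (m - i)) / 2 - (\<Sum>i<m. 1 / X i)) / X m"
      by (rule sumaux)
    finally show ?thesis by (simp only: harm_rev)
  qed
  moreover have "(- ln 2 + (\<Sum>i<Suc m. 1 / X i)) / X m + (- harm m / 2 - (\<Sum>i<m. 1 / X i)) / X m
     = (1 / X m - ln 2 - harm m / 2) / X m"
    by (simp add: add_divide_distrib[symmetric] algebra_simps)
  ultimately show ?thesis unfolding f_def[symmetric] by simp
qed



lemma M_aux:
  assumes "(x::real) \<noteq> 0" "y \<noteq> 0" "U \<noteq> 0" "V \<noteq> 0"
  shows "(1 / (x * V) - 1 / (U * y)) / y^2 + (x^2 - y^2) / (U * x^2 * y^3) = 1 / (x * (V * y^2)) - 1 / (U * x^2 * y)"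
  using assms by (simp add: divide_simps) (simp add: algebra_simps power2_eq_square power3_eq_cube)

definition M :: "nat \<Rightarrow> real \<Rightarrow> real \<Rightarrow> real" where
  "M b x y = (\<Sum>q<b. 1 / (x ^ (2*q+3) * y ^ (2*b+1-2*q)))"

lemma M_id:
  assumes "x \<noteq> 0" "y \<noteq> 0"
  shows "(x^2 - y^2) * M b x y = 1 / (x * y^(2*b+1)) - 1 / (x^(2*b+1) * y)"
proof (induction b)
  case 0 then show ?case by (simp add: M_def)
next
  case (Suc b)
  have "M (Suc b) x y = (\<Sum>q<b. 1 / (x ^ (2*q+3) * y ^ (2*Suc b+1-2*q))) + 1 / (x^(2*b+3) * y^3)"
    by (simp add: M_def)
  also have "(\<Sum>q<b. 1 / (x ^ (2*q+3) * y ^ (2*Suc b+1-2*q))) = M b x y / y^2"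
    unfolding M_def sum_divide_distrib
  proof (rule sum.cong[OF refl])
    fix q assume "q \<in> {..<b}"
    then have ex: "2*Suc b+1-2*q = (2*b+1-2*q) + 2" by auto
    have e: "y ^ (2*Suc b+1-2*q) = y^(2*b+1-2*q) * y^2" by (subst ex) (simp only: power_add)
    show "1 / (x ^ (2*q+3) * y ^ (2*Suc b+1-2*q)) = 1 / (x ^ (2*q+3) * y ^ (2*b+1-2*q)) / y^2"
      unfolding e by simp
  qed
  finally have e: "M (Suc b) x y = M b x y / y^2 + 1 / (x^(2*b+3) * y^3)" .
  have "(x^2 - y^2) * M (Suc b) x y = ((x^2 - y^2) * M b x y) / y^2 + (x^2 - y^2) / (x^(2*b+3) * y^3)"
    unfolding e using assms(2) by (simp add: field_simps)
  also have "\<dots> = (1 / (x * y^(2*b+1)) - 1 / (x^(2*b+1) * y)) / y^2 + (x^2 - y^2) / (x^(2*b+3) * y^3)"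
    using Suc by simp
  also have "\<dots> = 1 / (x * y^(2*Suc b+1)) - 1 / (x^(2*Suc b+1) * y)"
  proof -
    have e1: "2*b+3 = (2*b+1)+2" "2*Suc b+1 = (2*b+1)+2" by simp_all
    have p: "x^(2*b+3) = x^(2*b+1) * x^2" "y^(2*Suc b+1) = y^(2*b+1) * y^2" "x^(2*Suc b+1) = x^(2*b+1) * x^2"
      by (simp_all only: e1 power_add)
    show ?thesis unfolding p by (rule M_aux) (use assms in auto)
  qed
  finally show ?case .
qed

lemma L_aux:
  assumes "(u::real) > 0" "v > 0" "x > 0" "y > 0" "x \<noteq> y"
  shows "2 * ((1 / (x * (v * y)) - 1 / (u * x * y)) / (x^2 - y^2)) =
     (1 / (x * (x - y)) - 1 / (x * (x + y))) / (v * y * y) - (1 / (u * x * x * y * (x - y)) + 1 / (u * x * x * y * (x + y)))"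
proof -
  have a: "x - y \<noteq> 0" "x + y \<noteq> 0" using assms by (simp, linarith)
  have b: "x^2 - y^2 = (x-y)*(x+y)" by (simp add: algebra_simps power2_eq_square)
  show ?thesis unfolding b using a assms
    by (simp add: divide_simps)
qed
lemma L_id:
  assumes "x > 0" "y > 0" "x \<noteq> y"
  shows "2 * M b x y = (1/(x*(x-y)) - 1/(x*(x+y))) / y^(2*b+2)
           - (1/(x^(2*b+2)*y*(x-y)) + 1/(x^(2*b+2)*y*(x+y)))"
proof -
  have nz: "x^2 - y^2 \<noteq> 0"
  proof
    assume "x^2 - y^2 = 0"
    then have "(x - y) * (x + y) = 0" by (simp add: algebra_simps power2_eq_square)
    with assms show False by auto
  qed
  have Meq: "M b x y = (1 / (x * y^(2*b+1)) - 1 / (x^(2*b+1) * y)) / (x^2 - y^2)"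
    using M_id[of x y b] assms nz by (simp add: field_simps)
  have pows: "x^(2*b+1) = x^(2*b) * x" "x^(2*b+2) = x^(2*b)*x*x"
      "y^(2*b+1) = y^(2*b) * y" "y^(2*b+2) = y^(2*b)*y*y" by (simp_all add: power_add power2_eq_square)
  have "x^(2*b) > 0" "y^(2*b) > 0" using assms by auto
  then show ?thesis unfolding Meq pows by (intro L_aux) (use assms in auto)
qed

lemma M_diag: "x > 0 \<Longrightarrow> M b x x = real b / x^(2*b+4)"
proof -
  assume x: "x > 0"
  have "M b x x = (\<Sum>q<b. 1 / x^(2*b+4))"
    unfolding M_def
  proof (rule sum.cong[OF refl])
    fix q assume "q \<in> {..<b}"
    then have "(2*q+3) + (2*b+1-2*q) = 2*b+4" by auto
    then show "1 / (x ^ (2*q+3) * x ^ (2*b+1-2*q)) = 1 / x^(2*b+4)"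
      by (simp only: power_add[symmetric])
  qed
  also have "\<dots> = real b * (1 / x^(2*b+4))" by (simp only: sum_constant card_lessThan)
  finally show ?thesis by (simp only: times_divide_eq_right mult_1_right)
qed

lemma lam_summable: "s \<ge> 2 \<Longrightarrow> summable (\<lambda>m. 1 / X m ^ s)"
proof -
  assume s: "s \<ge> 2"
  have s0: "summable (\<lambda>n. inverse (real n ^ s))"
    using inverse_power_summable[OF s, where 'a=real] .
  have sg: "summable (\<lambda>n. inverse (real (Suc n) ^ s))"
    by (rule summable_Suc_iff[THEN iffD2, OF s0])
  have bd: "norm (1 / X n ^ s) \<le> inverse (real (Suc n) ^ s)" for n
  proof -
    have a: "real (Suc n) ^ s \<le> X n ^ s" by (intro power_mono) (auto simp: X_def)
    have b: "0 < X n ^ s * real (Suc n) ^ s" by simp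
    have "1 / X n ^ s \<le> 1 / real (Suc n) ^ s"
      by (rule divide_left_mono[OF a _ b]) simp
    moreover have "norm (1 / X n ^ s) = 1 / X n ^ s" by (simp add: less_imp_le)
    ultimately show ?thesis by (simp only: inverse_eq_divide)
  qed
  show ?thesis by (rule summable_comparison_test'[OF sg bd])
qed

definition lam :: "nat \<Rightarrow> real" where "lam s = (\<Sum>m. 1 / X m ^ s)"

lemma lam_sums: "s \<ge> 2 \<Longrightarrow> (\<lambda>m. 1 / X m ^ s) sums lam s"
  unfolding lam_def by (intro summable_sums lam_summable)

lemma lam_nonneg: "s \<ge> 2 \<Longrightarrow> lam s \<ge> 0"
  unfolding lam_def by (intro suminf_nonneg lam_summable) (auto simp: less_imp_le)

lemma M_sums_inner: "(\<lambda>j. M b (X j) (X k)) sums (\<Sum>q<b. lam (2*q+3) / X k ^ (2*b+1-2*q))"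
  unfolding M_def
proof (rule sums_sum)
  fix q assume "q \<in> {..<b}"
  have "(\<lambda>j. 1 / X j ^ (2*q+3) / X k ^ (2*b+1-2*q)) sums (lam (2*q+3) / X k ^ (2*b+1-2*q))"
    by (rule sums_divide[OF lam_sums]) simp
  then show "(\<lambda>j. 1 / (X j ^ (2*q+3) * X k ^ (2*b+1-2*q))) sums (lam (2*q+3) / X k ^ (2*b+1-2*q))"
    by (simp only: divide_divide_eq_left)
qed



lemma fubini_nat:
  fixes F :: "nat \<Rightarrow> nat \<Rightarrow> real"
  assumes S: "(\<lambda>(j,k). F j k) summable_on UNIV \<times> UNIV"
  shows "\<exists>T. (\<lambda>j. suminf (F j)) sums T \<and> (\<lambda>k. suminf (\<lambda>j. F j k)) sums T
            \<and> (\<forall>j. summable (F j)) \<and> (\<forall>k. summable (\<lambda>j. F j k))"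
proof -
  define T where "T = infsum (\<lambda>(j,k). F j k) (UNIV \<times> UNIV)"
  have HT: "((\<lambda>(j,k). F j k) has_sum T) (UNIV \<times> UNIV)"
    using S unfolding T_def by (simp add: summable_iff_has_sum_infsum[symmetric])
  have rowS: "F j summable_on UNIV" for j
    using summable_on_SigmaD1[OF S] by simp
  have rowH: "(F j has_sum suminf (F j)) UNIV" for j
  proof -
    have "(F j has_sum infsum (F j) UNIV) UNIV" using rowS[of j] by (simp add: summable_iff_has_sum_infsum[symmetric])
    moreover from has_sum_imp_sums[OF this] have "infsum (F j) UNIV = suminf (F j)" by (simp add: sums_iff)
    ultimately show ?thesis by simp
  qed
  have S2: "(\<lambda>(k,j). F j k) summable_on UNIV \<times> UNIV"
    using S summable_on_swap[where f="\<lambda>(j,k). F j k" and A=UNIV and B=UNIV] by (simp add: case_prod_unfold)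
  have HT2: "((\<lambda>(k,j). F j k) has_sum T) (UNIV \<times> UNIV)"
    using HT has_sum_swap[where f="\<lambda>(j,k). F j k" and A=UNIV and B=UNIV] by (simp add: case_prod_unfold)
  have colS: "(\<lambda>j. F j k) summable_on UNIV" for k
    using summable_on_SigmaD1[OF S2] by simp
  have colH: "((\<lambda>j. F j k) has_sum suminf (\<lambda>j. F j k)) UNIV" for k
  proof -
    have "((\<lambda>j. F j k) has_sum infsum (\<lambda>j. F j k) UNIV) UNIV" using colS[of k] by (simp add: summable_iff_has_sum_infsum[symmetric])
    moreover from has_sum_imp_sums[OF this] have "infsum (\<lambda>j. F j k) UNIV = suminf (\<lambda>j. F j k)" by (simp add: sums_iff)
    ultimately show ?thesis by simp
  qed
  have "((\<lambda>j. suminf (F j)) has_sum T) UNIV"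
    by (rule has_sum_Sigma'[OF HT]) (use rowH in simp)
  moreover have "((\<lambda>k. suminf (\<lambda>j. F j k)) has_sum T) UNIV"
    by (rule has_sum_Sigma'[OF HT2]) (use colH in simp)
  ultimately have "(\<lambda>j. suminf (F j)) sums T" "(\<lambda>k. suminf (\<lambda>j. F j k)) sums T"
    by (auto intro: has_sum_imp_sums)
  moreover have "summable (F j)" for j using has_sum_imp_sums[OF rowH[of j]] by (simp add: sums_iff)
  moreover have "summable (\<lambda>j. F j k)" for k using has_sum_imp_sums[OF colH[of k]] by (simp add: sums_iff)
  ultimately show ?thesis by blast
qed

lemma bnd: "(u::real) > 0 \<Longrightarrow> Q > 0 \<Longrightarrow> Q \<le> P \<Longrightarrow> 1 / (u * P) \<le> (1/u) * (1/Q)"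
  by (simp add: divide_simps mult_left_mono)
lemma p1: "(a::real) \<ge> 1 \<Longrightarrow> d \<ge> 1 \<Longrightarrow> (a + d) / 2 \<le> a * d"
proof -
  assume "a \<ge> 1" "d \<ge> 1"
  then have "a * 1 \<le> a * d" "1 * d \<le> a * d" by (intro mult_left_mono mult_right_mono; simp)+
  then show ?thesis by simp
qed
lemma p2: "(a::real) \<ge> d \<Longrightarrow> d > 0 \<Longrightarrow> d^2 \<le> a * d"
  by (simp add: power2_eq_square mult_right_mono)
lemma p3: "(a::real) > 0 \<Longrightarrow> c \<ge> 0 \<Longrightarrow> a^2 \<le> a * (c + a)"
  by (simp add: power2_eq_square algebra_simps)

definition Fb :: "nat \<Rightarrow> nat \<Rightarrow> nat \<Rightarrow> real" where
  "Fb b j k = (if j = k then 0 else 1 / (X j^(2*b+2) * X k * (X j - X k))) + 1 / (X j^(2*b+2) * X k * (X j + X k))"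

definition Bd :: "nat \<Rightarrow> nat \<Rightarrow> nat \<Rightarrow> real" where
  "Bd b j k = (1 / X j^(2*b+2)) * ((if k < j then 2 / X j else 0) + (if j < k then 1 / (4 * (real k - real j)^2) else 0) + 1 / X k^2)"

lemma Fb_bound: "norm (Fb b j k) \<le> Bd b j k"
proof -
  define u where "u = X j^(2*b+2)"
  have u: "u > 0" unfolding u_def by simp
  define D where "D = (if j = k then 0 else 1 / (u * (X k * (X j - X k))))"
  define E where "E = 1 / (u * (X k * (X j + X k)))"
  have FDE: "Fb b j k = D + E" unfolding Fb_def D_def E_def u_def by (simp add: mult.assoc)
  have E: "\<bar>E\<bar> \<le> (1/u) * (1 / X k^2)"
  proof -
    have "E \<ge> 0" unfolding E_def using u by (simp add: add_pos_pos less_imp_le)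
    moreover have "E \<le> (1/u) * (1 / X k^2)" unfolding E_def
      by (rule bnd[OF u]) (auto intro: p3 simp: less_imp_le add_pos_pos, metis X_pos less_irrefl)
    ultimately show ?thesis by simp
  qed
  have D: "\<bar>D\<bar> \<le> (1/u) * ((if k < j then 2 / X j else 0) + (if j < k then 1 / (4 * (real k - real j)^2) else 0))"
  proof (cases j k rule: linorder_cases)
    case less
    then have d: "X k - X j = 2 * (real k - real j)" "X k - X j > 0" by (auto simp: X_def)
    have "\<bar>D\<bar> = 1 / (u * (X k * \<bar>X j - X k\<bar>))" using less u unfolding D_def
      by (simp add: abs_mult less_imp_le)
    moreover have "\<bar>X j - X k\<bar> = X k - X j" using d by simp
    ultimately have "\<bar>D\<bar> = 1 / (u * (X k * (X k - X j)))" by simp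
    also have "\<dots> \<le> (1/u) * (1 / (X k - X j)^2)"
      by (rule bnd[OF u]) (use d in \<open>auto intro!: p2 simp: X_def\<close>)
    also have "(X k - X j)^2 = 4 * (real k - real j)^2" unfolding d(1) by (simp only: power_mult_distrib) simp
    finally show ?thesis using less by simp
  next
    case equal then show ?thesis unfolding D_def using u by simp
  next
    case greater
    then have d: "X j - X k \<ge> 1" by (auto simp: X_def)
    have "\<bar>D\<bar> = 1 / (u * (X k * (X j - X k)))" using greater u d unfolding D_def by (simp add: abs_mult less_imp_le)
    also have "\<dots> \<le> (1/u) * (1 / ((X k + (X j - X k)) / 2))"
      by (rule bnd[OF u _ p1]) (use d in auto)
    also have "1 / ((X k + (X j - X k)) / 2) = 2 / X j" by simp
    finally show ?thesis using greater by simp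
  qed
  have "norm (Fb b j k) \<le> \<bar>D\<bar> + \<bar>E\<bar>" unfolding FDE real_norm_def by (rule abs_triangle_ineq)
  also have "\<dots> \<le> Bd b j k" using D E unfolding Bd_def u_def[symmetric] by (simp add: algebra_simps)
  finally show ?thesis .
qed

definition c0 :: real where "c0 = (\<Sum>i. 1 / (4 * (real i + 1)^2))"

lemma c0_sums: "(\<lambda>i. 1 / (4 * (real i + 1)^2)) sums c0"
proof -
  have sg: "summable (\<lambda>n. inverse (real (Suc n) ^ 2))"
    by (rule summable_Suc_iff[THEN iffD2, OF inverse_power_summable]) simp
  have "norm (1 / (4 * (real n + 1)^2)) \<le> inverse (real (Suc n) ^ 2)" for n
    by (simp add: inverse_eq_divide divide_simps add.commute)
  then have "summable (\<lambda>i. 1 / (4 * (real i + 1)^2))"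
    by (rule summable_comparison_test'[OF sg])
  then show ?thesis unfolding c0_def by (rule summable_sums)
qed

lemma c0_nonneg: "c0 \<ge> 0"
  using sums_le[OF _ sums_zero c0_sums] by simp

lemma lam2_nonneg: "lam 2 \<ge> 0" by (rule lam_nonneg) simp

lemma Bd_nonneg: "Bd b j k \<ge> 0"
  unfolding Bd_def by (intro mult_nonneg_nonneg add_nonneg_nonneg) (auto simp: less_imp_le)

lemma Bd_sums: "(\<lambda>k. Bd b j k) sums ((1 / X j^(2*b+2)) * (real j * (2 / X j) + c0 + lam 2))"
proof -
  have s1: "(\<lambda>k. if k < j then 2 / X j else 0) sums (real j * (2 / X j))"
  proof -
    have "(\<lambda>k. if k < j then 2 / X j else 0) sums (\<Sum>k\<in>{..<j}. if k < j then 2 / X j else 0)"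
      by (rule sums_finite) auto
    then show ?thesis by simp
  qed
  define f where "f = (\<lambda>k. if j < k then 1 / (4 * (real k - real j)^2) else 0)"
  have "(\<lambda>i. f (i + Suc j)) = (\<lambda>i. 1 / (4 * (real i + 1)^2))"
    by (rule ext) (simp add: f_def)
  then have "(\<lambda>i. f (i + Suc j)) sums c0" using c0_sums by simp
  then have "f sums (c0 + (\<Sum>i<Suc j. f i))" by (rule sums_iff_shift[THEN iffD1])
  moreover have "(\<Sum>i<Suc j. f i) = 0" by (simp add: f_def)
  ultimately have s2: "f sums c0" by simp
  have s3: "(\<lambda>k. 1 / X k^2) sums lam 2" by (rule lam_sums) simp
  have "(\<lambda>k. (1 / X j^(2*b+2)) * ((if k < j then 2 / X j else 0) + f k + 1 / X k^2))
     sums ((1 / X j^(2*b+2)) * (real j * (2 / X j) + c0 + lam 2))"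
    by (intro sums_mult sums_add s1 s2 s3)
  then show ?thesis unfolding Bd_def f_def .
qed

lemma Bd_summable: "(\<lambda>(j,k). Bd b j k) summable_on UNIV \<times> UNIV"
proof -
  define g where "g = (\<lambda>j. (1 / X j^(2*b+2)) * (real j * (2 / X j) + c0 + lam 2))"
  have hs: "((\<lambda>k. Bd b j k) has_sum g j) UNIV" for j
    unfolding g_def by (rule sums_nonneg_imp_has_sum[OF Bd_sums Bd_nonneg])
  have "(\<lambda>j. (1 / X j^(2*b+2)) * (1 + c0 + lam 2)) sums (lam (2*b+2) * (1 + c0 + lam 2))"
    by (rule sums_mult2[OF lam_sums]) simp
  then have "((\<lambda>j. (1 / X j^(2*b+2)) * (1 + c0 + lam 2)) has_sum (lam (2*b+2) * (1 + c0 + lam 2))) UNIV"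
    by (rule sums_nonneg_imp_has_sum) (use c0_nonneg lam2_nonneg in \<open>simp add: less_imp_le\<close>)
  then have S: "(\<lambda>j. (1 / X j^(2*b+2)) * (1 + c0 + lam 2)) summable_on UNIV"
    by (rule has_sum_imp_summable)
  have le: "g j \<le> (1 / X j^(2*b+2)) * (1 + c0 + lam 2)" for j
  proof -
    have "real j * (2 / X j) \<le> 1" by (simp add: X_def divide_simps)
    then show ?thesis unfolding g_def by (intro mult_left_mono) auto
  qed
  have ge: "g j \<ge> 0" for j unfolding g_def using c0_nonneg lam2_nonneg
    by (intro mult_nonneg_nonneg add_nonneg_nonneg) (auto simp: less_imp_le)
  have gs: "g summable_on UNIV"
    by (rule summable_on_comparison_test[OF S]) (rule le, rule ge)
  have hs': "((\<lambda>k. (\<lambda>(j,k). Bd b j k) (j, k)) has_sum g j) UNIV" for j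
    using hs[of j] by simp
  show ?thesis
    by (rule summable_on_SigmaI[where g=g, OF hs' gs]) (simp add: Bd_nonneg)
qed

lemma Fb_summable: "(\<lambda>(j,k). Fb b j k) summable_on UNIV \<times> UNIV"
proof -
  have "(\<lambda>x. norm ((\<lambda>(j,k). Fb b j k) x)) summable_on UNIV \<times> UNIV"
    by (rule Infinite_Sum.abs_summable_on_comparison_test'[OF Bd_summable[of b]]) (use Fb_bound[of b, unfolded real_norm_def] in \<open>simp split: prod.split\<close>)
  then show ?thesis by (rule abs_summable_summable)
qed



definition Gv :: "nat \<Rightarrow> real" where "Gv k = (1 / X k - ln 2 - harm k / 2) / X k"
definition Kv :: "nat \<Rightarrow> real" where "Kv k = (ln 2 + harm k / 2) / X k"

lemma row_sums: "(\<lambda>k. Fb b j k) sums ((Kv j - Gv j) / X j^(2*b+2))"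
proof -
  have "(\<lambda>k. (1 / (X k * (X k + X j)) - (if k = j then 0 else 1 / (X k * (X k - X j)))) / X j^(2*b+2))
      sums ((Kv j - Gv j) / X j^(2*b+2))"
    unfolding Kv_def Gv_def by (intro sums_divide sums_diff K_sums G_sums)
  moreover have "(1 / (X k * (X k + X j)) - (if k = j then 0 else 1 / (X k * (X k - X j)))) / X j^(2*b+2)
      = Fb b j k" for k
  proof (cases "k = j")
    case True then show ?thesis by (simp add: Fb_def field_simps)
  next
    case False
    then have "X j - X k \<noteq> 0" "X k - X j \<noteq> 0" by (auto simp: X_def)
    then show ?thesis using False unfolding Fb_def
      by (simp add: divide_simps add.commute) (simp add: algebra_simps)
  qed
  ultimately show ?thesis by simp
qed

lemma diag_aux: "(x::real) > 0 \<Longrightarrow> w > 0 \<Longrightarrow>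
   2 * (real b / (w * x^2)) = (0 - 1 / (x * (x + x))) / w - (0 + 1 / (w * x * (x + x))) + (2 * real b + 1) / (w * x^2)"
  by (simp add: divide_simps power2_eq_square)

lemma pointwise:
  "2 * M b (X j) (X k) = ((if j = k then 0 else 1 / (X j * (X j - X k))) - 1 / (X j * (X j + X k))) / X k^(2*b+2)
      - Fb b j k + (if j = k then (2 * real b + 1) / X k^(2*b+4) else 0)"
proof (cases "j = k")
  case True
  have e: "2*b+4 = (2*b+2)+2" by simp
  have p: "X k^(2*b+4) = X k^(2*b+2) * (X k)^2" by (simp only: e power_add)
  have m: "M b (X k) (X k) = real b / (X k^(2*b+2) * (X k)^2)" using M_diag[OF X_pos, of b k] p by simp
  have "2 * (real b / (X k^(2*b+2) * (X k)^2)) = (0 - 1 / (X k * (X k + X k))) / X k^(2*b+2)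
     - (0 + 1 / (X k^(2*b+2) * X k * (X k + X k))) + (2 * real b + 1) / (X k^(2*b+2) * (X k)^2)"
    by (rule diag_aux) simp_all
  then show ?thesis unfolding True Fb_def m p by simp
next
  case False
  then have "X j \<noteq> X k" by (simp add: X_def)
  from L_id[OF X_pos X_pos this, of b] False show ?thesis by (simp add: Fb_def)
qed

definition Qs :: "nat \<Rightarrow> real" where "Qs b = (\<Sum>q<b. lam (2*q+3) * lam (2*b+1-2*q))"

lemma P_sums: "(\<lambda>k. \<Sum>q<b. lam (2*q+3) / X k ^ (2*b+1-2*q)) sums Qs b"
  unfolding Qs_def
proof (rule sums_sum)
  fix q assume "q \<in> {..<b}"
  then have "2*b+1-2*q \<ge> 2" by auto
  from sums_mult[OF lam_sums[OF this], of "lam (2*q+3)"]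
  show "(\<lambda>k. lam (2*q+3) / X k ^ (2*b+1-2*q)) sums (lam (2*q+3) * lam (2*b+1-2*q))"
    by simp
qed

lemma main_sums:
  "(\<lambda>k. harm k / X k^(2*b+3)) sums ((2 * real b + 3) / 2 * lam (2*b+4) - Qs b - 2 * ln 2 * lam (2*b+3))"
proof -
  define P where "P k = (\<Sum>q<b. lam (2*q+3) / X k ^ (2*b+1-2*q))" for k
  obtain T where T1: "(\<lambda>j. suminf (Fb b j)) sums T" and T2: "(\<lambda>k. suminf (\<lambda>j. Fb b j k)) sums T"
    and cs: "\<And>k. summable (\<lambda>j. Fb b j k)"
    using fubini_nat[OF Fb_summable[of b]] by blast
  define Phi where "Phi k = suminf (\<lambda>j. Fb b j k)" for k
  have rowv: "suminf (Fb b j) = (Kv j - Gv j) / X j^(2*b+2)" for j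
    using row_sums[of b j] by (simp add: sums_iff)
  have R: "(\<lambda>j. (Kv j - Gv j) / X j^(2*b+2)) sums T" using T1 unfolding rowv .
  have Phi_eq: "Phi k = (Gv k - Kv k) / X k^(2*b+2) + (2 * real b + 1) / X k^(2*b+4) - 2 * P k" for k
  proof -
    have c: "(\<lambda>j. Fb b j k) sums Phi k" unfolding Phi_def using cs[of k] by (rule summable_sums)
    have s1: "(\<lambda>j. 2 * M b (X j) (X k)) sums (2 * P k)"
      unfolding P_def by (intro sums_mult M_sums_inner)
    have s2: "(\<lambda>j. ((if j = k then 0 else 1 / (X j * (X j - X k))) - 1 / (X j * (X j + X k))) / X k^(2*b+2)
      - Fb b j k + (if j = k then (2 * real b + 1) / X k^(2*b+4) else 0))
      sums ((Gv k - Kv k) / X k^(2*b+2) - Phi k + (2 * real b + 1) / X k^(2*b+4))"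
      unfolding Gv_def Kv_def
      by (intro sums_add sums_diff sums_divide c G_sums K_sums sums_single)
    have "(\<lambda>j. 2 * M b (X j) (X k)) sums ((Gv k - Kv k) / X k^(2*b+2) - Phi k + (2 * real b + 1) / X k^(2*b+4))"
      using s2 by (simp only: pointwise[symmetric])
    from sums_unique2[OF s1 this] show ?thesis by simp
  qed
  have "(\<lambda>k. Phi k + (Kv k - Gv k) / X k^(2*b+2)) sums (T + T)"
    using T2 R unfolding Phi_def[symmetric] by (intro sums_add)
  moreover have "Phi k + (Kv k - Gv k) / X k^(2*b+2) = (2 * real b + 1) * (1 / X k^(2*b+4)) - 2 * P k" for k
    unfolding Phi_eq by (simp add: diff_divide_distrib)
  ultimately have "(\<lambda>k. (2 * real b + 1) * (1 / X k^(2*b+4)) - 2 * P k) sums (T + T)" by simp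
  moreover have "(\<lambda>k. (2 * real b + 1) * (1 / X k^(2*b+4)) - 2 * P k) sums ((2 * real b + 1) * lam (2*b+4) - 2 * Qs b)"
    unfolding P_def by (intro sums_diff sums_mult lam_sums P_sums) simp
  ultimately have TT: "T + T = (2 * real b + 1) * lam (2*b+4) - 2 * Qs b" by (rule sums_unique2)
  have "(\<lambda>k. (Kv k - Gv k) / X k^(2*b+2) - 2 * ln 2 * (1 / X k^(2*b+3)) + 1 / X k^(2*b+4))
      sums (T - 2 * ln 2 * lam (2*b+3) + lam (2*b+4))"
    by (intro sums_add sums_diff sums_mult R lam_sums) simp_all
  moreover have "(Kv k - Gv k) / X k^(2*b+2) - 2 * ln 2 * (1 / X k^(2*b+3)) + 1 / X k^(2*b+4) = harm k / X k^(2*b+3)" for k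
  proof -
    have ee: "2*b+3 = (2*b+2)+1" "2*b+4 = (2*b+2)+2" by simp_all
    have e: "X k^(2*b+3) = X k^(2*b+2) * X k" "X k^(2*b+4) = X k^(2*b+2) * X k * X k"
      by (simp_all only: ee power_add power_one_right power2_eq_square mult.assoc)
    have "X k^(2*b+2) > 0" by simp
    then show ?thesis unfolding Kv_def Gv_def e using X_pos[of k]
      by (simp add: divide_simps) (simp add: algebra_simps)
  qed
  ultimately have "(\<lambda>k. harm k / X k^(2*b+3)) sums (T - 2 * ln 2 * lam (2*b+3) + lam (2*b+4))" by simp
  moreover have "T - 2 * ln 2 * lam (2*b+3) + lam (2*b+4) = (2 * real b + 3) / 2 * lam (2*b+4) - Qs b - 2 * ln 2 * lam (2*b+3)"
    using TT by (simp add: field_simps)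
  ultimately show ?thesis by simp
qed


lemma dl_lam: "dlambda (real s) = lam s"
  unfolding dlambda_def lam_def X_def
  by (rule arg_cong[where f=suminf]) (rule ext, simp add: powr_realpow add_pos_nonneg)

theorem mainTheorem3:
  fixes a :: nat
  assumes "a \<ge> 2"
  shows "(\<lambda>m. harm (Suc m) / (2 * real (Suc m) + 1) ^ (2 * a - 1)) sums
           (- 2 * dlambda (real (2 * a - 1)) * ln 2
            + (real a - 1 / 2) * dlambda (real (2 * a))
            - (\<Sum>q = 1..a - 2. dlambda (real (2 * q + 1)) * dlambda (real (2 * a - 2 * q - 1))))"
proof -
  obtain b where a: "a = b + 2" using assms by (metis add.commute le_Suc_ex add_2_eq_Suc')
  define f where "f k = harm k / X k^(2*b+3)" for k
  have S: "f sums ((2 * real b + 3) / 2 * lam (2*b+4) - Qs b - 2 * ln 2 * lam (2*b+3))"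
    unfolding f_def by (rule main_sums)
  have f0: "f 0 = 0" by (simp add: f_def harm_def)
  have S1: "(\<lambda>m. f (Suc m)) sums ((2 * real b + 3) / 2 * lam (2*b+4) - Qs b - 2 * ln 2 * lam (2*b+3))"
    using S f0 by (simp add: sums_Suc_iff)
  have e1: "(\<lambda>m. harm (Suc m) / (2 * real (Suc m) + 1) ^ (2 * a - 1)) = (\<lambda>m. f (Suc m))"
  proof -
    have ea: "2 * a - 1 = 2*b+3" by (simp add: a)
    show ?thesis by (rule ext) (simp only: f_def X_def ea)
  qed
  have e2: "(\<Sum>q = 1..a - 2. dlambda (real (2 * q + 1)) * dlambda (real (2 * a - 2 * q - 1))) = Qs b"
  proof -
    have "(\<Sum>q = 1..a - 2. dlambda (real (2 * q + 1)) * dlambda (real (2 * a - 2 * q - 1)))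
        = (\<Sum>q<b. dlambda (real (2 * Suc q + 1)) * dlambda (real (2 * a - 2 * Suc q - 1)))"
      unfolding a by (simp only: add_diff_cancel_right' One_nat_def sum.atLeast1_atMost_eq)
    also have "\<dots> = Qs b" unfolding Qs_def
    proof (rule sum.cong[OF refl])
      fix q assume "q \<in> {..<b}"
      then have "2 * Suc q + 1 = 2*q+3" "2 * a - 2 * Suc q - 1 = 2*b+1-2*q" by (auto simp: a)
      then show "dlambda (real (2 * Suc q + 1)) * dlambda (real (2 * a - 2 * Suc q - 1)) = lam (2*q+3) * lam (2*b+1-2*q)"
        by (simp only: dl_lam)
    qed
    finally show ?thesis .
  qed
  have e3: "- 2 * dlambda (real (2 * a - 1)) * ln 2 + (real a - 1 / 2) * dlambda (real (2 * a)) - Qs b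
      = (2 * real b + 3) / 2 * lam (2*b+4) - Qs b - 2 * ln 2 * lam (2*b+3)"
  proof -
    have ea: "2 * a - 1 = 2*b+3" "2 * a = 2*b+4" by (simp_all add: a)
    have ra: "real a = real b + 2" by (simp add: a)
    show ?thesis unfolding dl_lam ea ra by (simp add: field_simps)
  qed
  show ?thesis unfolding e1 e2 e3 by (rule S1)
qed

end
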